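(* Let $f(x)=\sum_{n\ge 1} a_n \frac{x^n}{n!}$ be a formal power series with complex coefficients and $a_1\ne0$, and put $q:=a_1$. For all integers $s\ge 0$ and $n\ge k\ge 0$, \[ \begin{bmatrix} n\\ k\end{bmatrix}_{\phi^s}=\sum_{p=0}^{\min(s,n-k)}\ \sum_{k=j_0<j_1<\cdots<j_p=n} h_{s-p}\big(q^{j_0},\dots,q^{j_p}\big)\prod_{i=0}^{p-1}\begin{bmatrix} j_{i+1}\\ j_i\end{bmatrix}_{\phi}, \] where the inner sum is over strictly increasing integer tuples with $j_0=k$ and $j_p=n$, and \[ h_{s-p}(q^{j_0},\dots,q^{j_p})=\sum_{\substack{\lambda_0+\cdots+\lambda_p=s-p\\ \lambda_i\ge 0}} q^{j_0\lambda_0+\cdots+j_p\lambda_p}. \]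
   Context: For an integer $s\ge 0$, $f^s$ denotes the $s$-fold compositional iterate of $f$, with $f^0(x)=x$. For integers $n\ge k\ge 0$, $\begin{bmatrix} n\\ k\end{bmatrix}_{\phi^s}$ is defined by $\frac{f^s(x)^k}{k!}=\sum_{n\ge k}\begin{bmatrix} n\\ k\end{bmatrix}_{\phi^s}\frac{x^n}{n!}$, and $\begin{bmatrix} n\\ k\end{bmatrix}_{\phi}:=\begin{bmatrix} n\\ k\end{bmatrix}_{\phi^1}$ (the exponential partial Bell polynomial $B_{n,k}(a_1,\dots,a_{n-k+1})$). $h_m(x_0,\dots,x_p)$ denotes the complete homogeneous symmetric polynomial of degree $m$ in $x_0,\dots,x_p$. *)

theory Defs
  imports Complex_Main "HOL-Computational_Algebra.Formal_Power_Series"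
begin

definition fps_iter :: "complex fps \<Rightarrow> nat \<Rightarrow> complex fps" where
  "fps_iter f s = ((\<lambda>g. f oo g) ^^ s) fps_X"

text \<open>[n,k]_{phi^s}: f^s(x)^k / k! = sum_n [n,k] x^n/n!\<close>
definition bracket :: "complex fps \<Rightarrow> nat \<Rightarrow> nat \<Rightarrow> nat \<Rightarrow> complex" where
  "bracket f s n k = of_nat (fact n) / of_nat (fact k) * fps_nth (fps_iter f s ^ k) n"

definition comp_hom :: "nat \<Rightarrow> complex list \<Rightarrow> complex" where
  "comp_hom m xs = (\<Sum>ls\<in>{ls. length ls = length xs \<and> sum_list ls = m}.
       \<Prod>i<length xs. xs ! i ^ (ls ! i))"

end

theory Submission
  imports Defs
begin
unbundle fps_syntax


lemma iter0: "fps_iter f 0 = fps_X" by (simp add: fps_iter_def)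
lemma iterSuc: "fps_iter f (Suc s) = f oo fps_iter f s" by (simp add: fps_iter_def)
lemma iter_nth0: "f $ 0 = 0 \<Longrightarrow> fps_iter f s $ 0 = 0"
  by (induct s) (simp_all add: iter0 iterSuc)
lemma iter1: "fps_iter f (Suc 0) = f" by (simp add: fps_iter_def)

lemma bracket0: "bracket f 0 n k = (if n = k then 1 else 0)"
  by (simp add: bracket_def iter0)

lemma bracket_zero: "f $ 0 = 0 \<Longrightarrow> n < k \<Longrightarrow> bracket f s n k = 0"
  using startsby_zero_power_prefix[OF iter_nth0[of f s]] by (simp add: bracket_def)

lemma bracket_diag: "f $ 0 = 0 \<Longrightarrow> bracket f 1 k k = (f $ 1) ^ k"
  by (simp add: bracket_def iter1 startsby_zero_power_nth_same)

lemma bracket_Suc: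
  assumes "f $ 0 = 0"
  shows "bracket f (Suc s) n k = (\<Sum>m\<le>n. bracket f s n m * bracket f 1 m k)"
proof -
  let ?g = "fps_iter f s"
  have g0: "?g $ 0 = 0" using iter_nth0[OF assms] .
  have "bracket f (Suc s) n k = of_nat (fact n) / of_nat (fact k) * ((f ^ k oo ?g) $ n)"
    by (simp add: bracket_def iterSuc fps_compose_power[OF g0])
  also have "\<dots> = (\<Sum>m\<le>n. of_nat (fact n) / of_nat (fact k) * ((f^k) $ m * (?g ^ m $ n)))"
    by (simp add: fps_compose_nth atLeast0AtMost sum_distrib_left)
  also have "\<dots> = (\<Sum>m\<le>n. bracket f s n m * bracket f 1 m k)"
    by (rule sum.cong) (simp_all add: bracket_def iter1 field_simps)
  finally show ?thesis .
qed

lemma ch_Nil: "comp_hom m [] = (if m = 0 then 1 else 0)"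
proof -
  have "{ls. length ls = length ([]::complex list) \<and> sum_list ls = m} = (if m = 0 then {[]} else {})"
    by auto
  then show ?thesis by (simp add: comp_hom_def)
qed

lemma finite_ls: "finite {ls::nat list. length ls = n \<and> sum_list ls = m}"
proof (rule finite_subset)
  show "{ls::nat list. length ls = n \<and> sum_list ls = m} \<subseteq> {xs. set xs \<subseteq> {..m} \<and> length xs = n}"
    using member_le_sum_list by fastforce
  show "finite {xs. set xs \<subseteq> {..m} \<and> length xs = n}"
    by (rule finite_lists_length_eq) simp
qed

lemma ch_Cons: "comp_hom m (x # xs) = (\<Sum>l\<le>m. x ^ l * comp_hom (m - l) xs)"
proof -
  let ?A = "\<lambda>m. {ls::nat list. length ls = length xs \<and> sum_list ls = m}"
  have eq: "{ls. length ls = length (x # xs) \<and> sum_list ls = m}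
      = (\<lambda>(l, ls). l # ls) ` (SIGMA l:{..m}. ?A (m - l))"
  proof (intro set_eqI iffI)
    fix ls assume "ls \<in> {ls. length ls = length (x # xs) \<and> sum_list ls = m}"
    then obtain l ls' where "ls = l # ls'" "length ls' = length xs" "l + sum_list ls' = m"
      by (cases ls) auto
    then show "ls \<in> (\<lambda>(l, ls). l # ls) ` (SIGMA l:{..m}. ?A (m - l))"
      by (auto intro!: image_eqI[of _ _ "(l, ls')"])
  qed auto
  have inj: "inj_on (\<lambda>(l, ls). l # ls) (SIGMA l:{..m}. ?A (m - l))"
    by (auto simp: inj_on_def)
  have "comp_hom m (x # xs) = (\<Sum>(l, ls)\<in>(SIGMA l:{..m}. ?A (m - l)).
          \<Prod>i<Suc (length xs). (x # xs) ! i ^ ((l # ls) ! i))"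
    unfolding comp_hom_def eq by (subst sum.reindex[OF inj]) (simp add: case_prod_beta)
  also have "\<dots> = (\<Sum>(l, ls)\<in>(SIGMA l:{..m}. ?A (m - l)). x ^ l * (\<Prod>i<length xs. xs ! i ^ (ls ! i)))"
    by (rule sum.cong) (auto simp: prod.lessThan_Suc_shift simp del: prod.lessThan_Suc)
  also have "\<dots> = (\<Sum>l\<le>m. \<Sum>ls\<in>?A (m - l). x ^ l * (\<Prod>i<length xs. xs ! i ^ (ls ! i)))"
    by (subst sum.Sigma) (auto simp: finite_ls)
  also have "\<dots> = (\<Sum>l\<le>m. x ^ l * comp_hom (m - l) xs)"
    by (simp add: comp_hom_def sum_distrib_left)
  finally show ?thesis .
qed

lemma ch_0: "comp_hom 0 xs = 1"
  by (induct xs) (simp_all add: ch_Nil ch_Cons)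

lemma ch_Suc_Cons: "comp_hom (Suc m) (x # xs) = x * comp_hom m (x # xs) + comp_hom (Suc m) xs"
  by (simp add: ch_Cons sum.atMost_Suc_shift sum_distrib_left mult.assoc del: sum.atMost_Suc)



definition PS :: "nat \<Rightarrow> nat \<Rightarrow> nat \<Rightarrow> nat list set" where
  "PS p k n = {js. length js = p + 1 \<and> sorted_wrt (<) js \<and> js ! 0 = k \<and> js ! p = n}"

lemma sorted_lb: "sorted_wrt (<) (js::nat list) \<Longrightarrow> i < length js \<Longrightarrow> js ! 0 + i \<le> js ! i"
proof (induct i)
  case (Suc i)
  then have "js ! i < js ! Suc i" by (simp add: sorted_wrt_nth_less)
  with Suc show ?case by simp
qed simp

lemma PS_bound: "js \<in> PS p k n \<Longrightarrow> k + p \<le> n"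
  unfolding PS_def using sorted_lb[of js p] by auto

lemma PS_le: "js \<in> PS p k n \<Longrightarrow> x \<in> set js \<Longrightarrow> x \<le> n"
proof -
  assume a: "js \<in> PS p k n" and x: "x \<in> set js"
  then obtain i where i: "i < length js" "x = js ! i" by (auto simp: in_set_conv_nth)
  have l: "length js = Suc p" "sorted_wrt (<) js" "js ! p = n" using a by (auto simp: PS_def)
  show "x \<le> n"
  proof (cases "i = p")
    case False
    then have "i < p" using i l by simp
    then have "js ! i < js ! p" using l sorted_wrt_nth_less[of "(<)" js i p] by simp
    then show ?thesis using i l by simp
  qed (use i l in simp)
qed

lemma PS_finite: "finite (PS p k n)"
proof (rule finite_subset)
  show "PS p k n \<subseteq> {xs. set xs \<subseteq> {..n} \<and> length xs = p + 1}"
    using PS_le by (auto simp: PS_def)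
  show "finite {xs. set xs \<subseteq> {..n} \<and> length xs = p + 1}"
    by (rule finite_lists_length_eq) simp
qed

lemma PS_0: "PS 0 k n = (if k = n then {[k]} else {})"
  by (auto simp: PS_def length_Suc_conv)

lemma PS_Suc: "PS (Suc p) k n = (\<lambda>(j, js). k # js) ` (SIGMA j:{k<..n}. PS p j n)"
proof (intro set_eqI iffI)
  fix js assume a: "js \<in> PS (Suc p) k n"
  then obtain js' where js: "js = k # js'" "length js' = p + 1"
    by (cases js) (auto simp: PS_def)
  have "sorted_wrt (<) js'" "js' ! p = n" using a js by (auto simp: PS_def)
  moreover have "k < js' ! 0" using a js by (auto simp: PS_def)
  moreover have "js' ! 0 \<le> n" using PS_le[OF a] js by auto
  ultimately show "js \<in> (\<lambda>(j, js). k # js) ` (SIGMA j:{k<..n}. PS p j n)"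
    using js by (auto simp: PS_def intro!: image_eqI[of _ _ "(js' ! 0, js')"])
next
  fix js assume "js \<in> (\<lambda>(j, js). k # js) ` (SIGMA j:{k<..n}. PS p j n)"
  then obtain j js' where js: "js = k # js'" "k < j" "js' \<in> PS p j n" by auto
  have "\<forall>x\<in>set js'. k < x"
  proof
    fix x assume "x \<in> set js'"
    then obtain i where "i < length js'" "x = js' ! i" by (auto simp: in_set_conv_nth)
    then show "k < x" using sorted_lb[of js' i] js by (auto simp: PS_def)
  qed
  then show "js \<in> PS (Suc p) k n" using js by (auto simp: PS_def)
qed

lemma sum_PS_Suc: "(\<Sum>js\<in>PS (Suc p) k n. F js) = (\<Sum>j\<in>{k<..n}. \<Sum>js\<in>PS p j n. F (k # js))"
proof -
  have inj: "inj_on (\<lambda>(j, js). k # js) (SIGMA j:{k<..n}. PS p j n)"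
    by (auto simp: inj_on_def PS_def)
  show ?thesis
    unfolding PS_Suc by (subst sum.reindex[OF inj]) (simp add: sum.Sigma PS_finite case_prod_beta)
qed



definition G :: "complex fps \<Rightarrow> nat \<Rightarrow> nat \<Rightarrow> nat \<Rightarrow> complex" where
  "G f s n k = (\<Sum>p\<le>s. \<Sum>js\<in>PS p k n.
      comp_hom (s - p) (map (\<lambda>j. (f $ 1) ^ j) js) * (\<Prod>i<p. bracket f 1 (js ! (i + 1)) (js ! i)))"

lemma G_0: "G f 0 n k = (if n = k then 1 else 0)"
  by (auto simp: G_def PS_0 ch_0)

lemma G_Suc:
  "G f (Suc s) n k = (f $ 1) ^ k * G f s n k + (\<Sum>j\<in>{k<..n}. bracket f 1 j k * G f s n j)"
proof -
  define d where "d = (\<lambda>j::nat. (f $ 1) ^ j)"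
  define w where "w = (\<lambda>p js. \<Prod>i<p. bracket f 1 (js ! (i + 1)) (js ! i))"
  define U where "U = (\<lambda>p. \<Sum>js\<in>PS p k n. comp_hom (Suc s - p) (map d js) * w p js)"
  define V where "V = (\<lambda>p. \<Sum>js\<in>PS p k n. comp_hom (s - p) (map d js) * w p js)"
  define R where "R = (\<lambda>p. \<Sum>js\<in>PS p k n. comp_hom (Suc s - p) (map d (tl js)) * w p js)"
  have GS: "G f (Suc s) n k = (\<Sum>p\<le>Suc s. U p)" by (simp add: G_def U_def d_def w_def)
  have Gs: "G f s n k = (\<Sum>p\<le>s. V p)" by (simp add: G_def V_def d_def w_def)
  have hd: "js = k # tl js" if "js \<in> PS p k n" for js p
    using that by (cases js) (auto simp: PS_def)
  have U_eq: "U p = (if p \<le> s then d k * V p else 0) + R p" if "p \<le> Suc s" for p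
  proof -
    have "comp_hom (Suc s - p) (map d js) =
        (if p \<le> s then d k * comp_hom (s - p) (map d js) else 0) + comp_hom (Suc s - p) (map d (tl js))"
      if js: "js \<in> PS p k n" for js
    proof (cases "p \<le> s")
      case True
      then have "Suc s - p = Suc (s - p)" by simp
      obtain js' where "js = k # js'" using hd[OF js] by blast
      then show ?thesis using True \<open>Suc s - p = Suc (s - p)\<close> ch_Suc_Cons[of "s - p" "d k" "map d js'"]
        by simp
    next
      case False
      then have "Suc s - p = 0" using \<open>p \<le> Suc s\<close> by simp
      then show ?thesis using False by (simp add: ch_0)
    qed
    then have "U p = (\<Sum>js\<in>PS p k n. (if p \<le> s then d k * comp_hom (s - p) (map d js) else 0) * w p js
        + comp_hom (Suc s - p) (map d (tl js)) * w p js)"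
      unfolding U_def by (intro sum.cong refl) (simp add: distrib_right)
    also have "\<dots> = (if p \<le> s then d k * V p else 0) + R p"
      by (simp add: V_def R_def sum.distrib sum_distrib_left mult.assoc)
    finally show ?thesis .
  qed
  have "(\<Sum>p\<le>Suc s. U p) = (\<Sum>p\<le>Suc s. (if p \<le> s then d k * V p else 0)) + (\<Sum>p\<le>Suc s. R p)"
    by (simp add: U_eq sum.distrib del: sum.atMost_Suc)
  also have "(\<Sum>p\<le>Suc s. (if p \<le> s then d k * V p else 0)) = d k * G f s n k"
    by (simp add: Gs sum_distrib_left)
  also have "(\<Sum>p\<le>Suc s. R p) = R 0 + (\<Sum>p\<le>s. R (Suc p))"
    by (simp add: sum.atMost_Suc_shift del: sum.atMost_Suc)
  also have "R 0 = 0" by (simp add: R_def PS_0 ch_Nil)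
  also have "(\<Sum>p\<le>s. R (Suc p)) = (\<Sum>j\<in>{k<..n}. bracket f 1 j k * G f s n j)"
  proof -
    have "R (Suc p) = (\<Sum>j\<in>{k<..n}. bracket f 1 j k *
        (\<Sum>js\<in>PS p j n. comp_hom (s - p) (map d js) * w p js))" for p
    proof -
      have "R (Suc p) = (\<Sum>j\<in>{k<..n}. \<Sum>js\<in>PS p j n.
          comp_hom (s - p) (map d js) * w (Suc p) (k # js))"
        by (simp add: R_def sum_PS_Suc)
      also have "\<dots> = (\<Sum>j\<in>{k<..n}. \<Sum>js\<in>PS p j n.
          bracket f 1 j k * (comp_hom (s - p) (map d js) * w p js))"
      proof (intro sum.cong refl)
        fix j js assume "js \<in> PS p j n"
        then have "js ! 0 = j" by (simp add: PS_def)
        then show "comp_hom (s - p) (map d js) * w (Suc p) (k # js) =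
            bracket f 1 j k * (comp_hom (s - p) (map d js) * w p js)"
          by (simp add: w_def prod.lessThan_Suc_shift del: prod.lessThan_Suc)
      qed
      finally show ?thesis by (simp add: sum_distrib_left)
    qed
    then have "(\<Sum>p\<le>s. R (Suc p)) = (\<Sum>p\<le>s. \<Sum>j\<in>{k<..n}. bracket f 1 j k *
        (\<Sum>js\<in>PS p j n. comp_hom (s - p) (map d js) * w p js))" by simp
    also have "\<dots> = (\<Sum>j\<in>{k<..n}. bracket f 1 j k * (\<Sum>p\<le>s.
        (\<Sum>js\<in>PS p j n. comp_hom (s - p) (map d js) * w p js)))"
      by (subst sum.swap) (simp add: sum_distrib_left)
    also have "\<dots> = (\<Sum>j\<in>{k<..n}. bracket f 1 j k * G f s n j)"
      by (simp add: G_def d_def w_def)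
    finally show ?thesis .
  qed
  finally show ?thesis using GS by (simp add: d_def)
qed

lemma M_eq_G:
  assumes f0: "f $ 0 = 0"
  shows "bracket f s n k = G f s n k"
proof (induct s arbitrary: n k)
  case 0
  then show ?case by (simp add: bracket0 G_0)
next
  case (Suc s)
  have split: "(\<Sum>m\<le>n. bracket f s n m * bracket f 1 m k) =
      bracket f s n k * bracket f 1 k k + (\<Sum>m\<in>{k<..n}. bracket f s n m * bracket f 1 m k)"
  proof (cases "k \<le> n")
    case True
    have "(\<Sum>m\<le>n. bracket f s n m * bracket f 1 m k) = (\<Sum>m\<in>{k..n}. bracket f s n m * bracket f 1 m k)"
      by (rule sum.mono_neutral_right) (auto simp: bracket_zero[OF f0])
    also have "{k..n} = insert k {k<..n}" using True by auto
    finally show ?thesis by simp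
  next
    case False
    then show ?thesis by (auto simp: bracket_zero[OF f0] intro!: sum.neutral)
  qed
  have "bracket f (Suc s) n k = (\<Sum>m\<le>n. bracket f s n m * bracket f 1 m k)"
    by (rule bracket_Suc[OF f0])
  also have "\<dots> = G f s n k * (f $ 1) ^ k + (\<Sum>m\<in>{k<..n}. G f s n m * bracket f 1 m k)"
    unfolding split unfolding bracket_diag[OF f0] Suc ..
  also have "\<dots> = G f (Suc s) n k"
    unfolding G_Suc by (simp add: mult.commute)
  finally show ?case .
qed


lemma PS_empty: "n < k + p \<Longrightarrow> PS p k n = {}"
  using PS_bound[of _ p k n] by fastforce

theorem mainTheorem3:
  fixes f :: "complex fps" and s n k :: nat
  assumes "fps_nth f 0 = 0"
    and "fps_nth f 1 \<noteq> 0"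
    and "k \<le> n"
  shows "bracket f s n k =
    (\<Sum>p = 0..min s (n - k).
       \<Sum>js\<in>{js. length js = p + 1 \<and> sorted_wrt (<) js \<and> js ! 0 = k \<and> js ! p = n}.
         comp_hom (s - p) (map (\<lambda>j. (fps_nth f 1) ^ j) js) *
         (\<Prod>i<p. bracket f 1 (js ! (i + 1)) (js ! i)))"
proof -
  have "bracket f s n k = G f s n k" using M_eq_G assms(1) by blast
  also have "\<dots> = (\<Sum>p = 0..min s (n - k). \<Sum>js\<in>PS p k n.
         comp_hom (s - p) (map (\<lambda>j. (fps_nth f 1) ^ j) js) *
         (\<Prod>i<p. bracket f 1 (js ! (i + 1)) (js ! i)))"
    unfolding G_def atLeast0AtMost[symmetric]
    by (rule sum.mono_neutral_right) (auto simp: PS_empty)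
  finally show ?thesis by (simp add: PS_def)
qed

end
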